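(* Let $X$ be a Hausdorff space. Assume there is $K\in\mathcal{K}(X)$ such that every clopen subset $U$ of $X$ with $K\subset U$ satisfies $U=X$. Then $\mathcal{C}=\{K\cup\{x\}:x\in X\}$ is a connected subset of $\mathcal{K}(X)$.
   Context: $\mathcal{K}(X)$ is the set of nonempty compact subsets of $X$ with the Vietoris topology (generated by $U^+=\{A: A\subset U\}$ and $U^-=\{A: A\cap U\neq\emptyset\}$ for $U$ open in $X$). *)

theory Defs
  imports "HOL-Analysis.Analysis"
begin

definition compact_sets :: "'a topology \<Rightarrow> 'a set set" where
  "compact_sets X = {A. A \<noteq> {} \<and> compactin X A}"

definition vupper :: "'a set \<Rightarrow> 'a set set" where
  "vupper U = {A. A \<subseteq> U}"

definition vlower :: "'a set \<Rightarrow> 'a set set" where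
  "vlower U = {A. A \<inter> U \<noteq> {}}"

definition vietoris :: "'a topology \<Rightarrow> 'a set topology" where
  "vietoris X = subtopology
     (topology_generated_by ({vupper U | U. openin X U} \<union> {vlower U | U. openin X U}))
     (compact_sets X)"

end

theory Submission
  imports Defs
begin

theorem lemma5p1:
  fixes X :: "'a topology" and K :: "'a set"
  assumes "Hausdorff_space X"
    and "K \<in> compact_sets X"
    and "\<And>U. openin X U \<Longrightarrow> closedin X U \<Longrightarrow> K \<subseteq> U \<Longrightarrow> U = topspace X"
  shows "(\<lambda>x. K \<union> {x}) ` topspace X \<subseteq> compact_sets X \<and>
         connectedin (vietoris X) ((\<lambda>x. K \<union> {x}) ` topspace X)"
proof -
  define f where "f = (\<lambda>x. K \<union> {x})"
  define C where "C = f ` topspace X"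
  define S where "S = {vupper U | U. openin X U} \<union> {vlower U | U. openin X U}"
  have Kne: "K \<noteq> {}" and Kc: "compactin X K" using assms(2) by (auto simp: compact_sets_def)
  have KX: "K \<subseteq> topspace X" using Kc compactin_subset_topspace by blast
  have sub: "C \<subseteq> compact_sets X"
  proof
    fix A assume "A \<in> C"
    then obtain x where x: "x \<in> topspace X" "A = K \<union> {x}" by (auto simp: C_def f_def)
    have "compactin X {x}" using x by simp
    then have "compactin X (K \<union> {x})" using Kc compactin_Un by blast
    then show "A \<in> compact_sets X" using x by (auto simp: compact_sets_def)
  qed
  have cg: "continuous_map X (topology_generated_by S) f"
  proof (rule continuous_on_generated_topo)
    fix W assume "W \<in> S"
    then obtain U where U: "openin X U" "W = vupper U \<or> W = vlower U" by (auto simp: S_def)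
    show "openin X (f -` W \<inter> topspace X)"
    proof (cases "W = vupper U")
      case True
      show ?thesis
      proof (cases "K \<subseteq> U")
        case True
        then have "f -` W \<inter> topspace X = U" using \<open>W = vupper U\<close> U(1) openin_subset
          by (auto simp: f_def vupper_def)
        then show ?thesis using U by simp
      next
        case False
        then have "f -` W \<inter> topspace X = {}" using \<open>W = vupper U\<close>
          by (auto simp: f_def vupper_def)
        then show ?thesis by simp
      qed
    next
      case False
      then have W: "W = vlower U" using U by blast
      show ?thesis
      proof (cases "K \<inter> U = {}")
        case True
        then have "f -` W \<inter> topspace X = U" using W U(1) openin_subset
          by (auto simp: f_def vlower_def)
        then show ?thesis using U by simp
      next
        case False
        then have "f -` W \<inter> topspace X = topspace X" using W
          by (auto simp: f_def vlower_def)
        then show ?thesis by simp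
      qed
    qed
  next
    have "vupper (topspace X) \<in> S" by (auto simp: S_def)
    moreover have "f ` topspace X \<subseteq> vupper (topspace X)" using KX by (auto simp: f_def vupper_def)
    ultimately show "f ` topspace X \<subseteq> \<Union> S" by blast
  qed
  have cv: "continuous_map X (vietoris X) f"
    unfolding vietoris_def S_def[symmetric]
    using cg sub by (auto simp: continuous_map_in_subtopology C_def)
  have cC: "continuous_map X (subtopology (vietoris X) C) f"
    using cv by (simp add: continuous_map_in_subtopology C_def)
  have Ctop: "C \<subseteq> topspace (vietoris X)"
    using cv by (simp add: C_def continuous_map_image_subset_topspace)
  have tC: "topspace (subtopology (vietoris X) C) = C" using Ctop by (simp add: inf.absorb2)
  obtain k where k: "k \<in> K" using Kne by blast
  have fk: "f k = K" using k by (auto simp: f_def)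
  have kX: "k \<in> topspace X" using k KX by blast
  have key: "C \<subseteq> T" if T: "openin (subtopology (vietoris X) C) T" "closedin (subtopology (vietoris X) C) T" "K \<in> T" for T
  proof -
    define P where "P = {x \<in> topspace X. f x \<in> T}"
    have "openin X P" unfolding P_def using openin_continuous_map_preimage[OF cC T(1)] .
    moreover have "closedin X P" unfolding P_def using closedin_continuous_map_preimage[OF cC T(2)] .
    moreover have "K \<subseteq> P" using KX T(3) by (auto simp: P_def f_def insert_absorb)
    ultimately have "P = topspace X" using assms(3) by blast
    then show ?thesis by (auto simp: C_def P_def)
  qed
  have "connected_space (subtopology (vietoris X) C)"
    unfolding connected_space_clopen_in
  proof (intro allI impI)
    fix T assume T: "openin (subtopology (vietoris X) C) T \<and> closedin (subtopology (vietoris X) C) T"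
    have KC: "K \<in> C" using kX fk unfolding C_def by force
    have TC: "T \<subseteq> C" using T openin_subset tC by metis
    show "T = {} \<or> T = topspace (subtopology (vietoris X) C)"
    proof (cases "K \<in> T")
      case True
      then show ?thesis using key T TC tC by blast
    next
      case False
      have "C \<subseteq> C - T"
      proof (rule key)
        show "openin (subtopology (vietoris X) C) (C - T)"
          using openin_diff[OF openin_topspace, of _ T] T tC by metis
        show "closedin (subtopology (vietoris X) C) (C - T)"
          using closedin_diff[OF closedin_topspace, of _ T] T tC by metis
        show "K \<in> C - T" using KC False by blast
      qed
      then show ?thesis using TC by blast
    qed
  qed
  then show ?thesis using sub Ctop by (simp add: connectedin_def C_def f_def)
qed

end
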